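(* For $p\in\mathbb{N}$ consider the grid with vertex set $\{0,\dots,p\}^2$ and segment set $\mathcal{S}_p$ of directed edges between adjacent vertices. Let $0<\alpha\le1$ and let $Y_p\sim\mu_p$, where origin $x_1$ and destination $x_2$ are independent, each with $\mathbb{P}[X=(i,j)]=\prod_{k\in\{i,j\}}\binom{p}{k}B(\alpha+k,\alpha+p-k)/B(\alpha,\alpha)$, and given $(x_1,x_2)$ the route is drawn uniformly among routes from $x_1$ to $x_2$ with exactly $\|x_1-x_2\|_1$ segments and the minimum possible number of turns. Then for every segment $s\in\mathcal{S}_p$, $$p^{-1-\alpha}\lesssim q_s=\mathbb{P}[s\in Y_p]\lesssim p^{-\alpha}.$$
   Context: $B(\cdot,\cdot)$ is the beta function. $f\lesssim g$ means $f(p)\le c\,g(p)$ for a constant $c>0$ not depending on $p$ or on $s$. *)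

theory Defs
  imports "HOL-Analysis.Analysis"
begin

type_synonym vtx = "int \<times> int"

definition grid :: "nat \<Rightarrow> vtx set" where
  "grid p = {0..int p} \<times> {0..int p}"

definition adj :: "vtx \<Rightarrow> vtx \<Rightarrow> bool" where
  "adj u v \<longleftrightarrow> \<bar>fst u - fst v\<bar> + \<bar>snd u - snd v\<bar> = 1"

definition segments :: "nat \<Rightarrow> (vtx \<times> vtx) set" where
  "segments p = {(u, v). u \<in> grid p \<and> v \<in> grid p \<and> adj u v}"

definition l1dist :: "vtx \<Rightarrow> vtx \<Rightarrow> nat" where
  "l1dist u v = nat (\<bar>fst u - fst v\<bar> + \<bar>snd u - snd v\<bar>)"

definition is_route :: "nat \<Rightarrow> vtx \<Rightarrow> vtx \<Rightarrow> vtx list \<Rightarrow> bool" where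
  "is_route p x y vs \<longleftrightarrow> vs \<noteq> [] \<and> hd vs = x \<and> last vs = y \<and> set vs \<subseteq> grid p \<and>
     (\<forall>k. k + 1 < length vs \<longrightarrow> adj (vs ! k) (vs ! (k + 1)))"

definition turns :: "vtx list \<Rightarrow> nat" where
  "turns vs = card {k. 0 < k \<and> k + 1 < length vs \<and>
     (fst (vs ! (k + 1)) - fst (vs ! k), snd (vs ! (k + 1)) - snd (vs ! k)) \<noteq>
     (fst (vs ! k) - fst (vs ! (k - 1)), snd (vs ! k) - snd (vs ! (k - 1)))}"

definition shortest_routes :: "nat \<Rightarrow> vtx \<Rightarrow> vtx \<Rightarrow> vtx list set" where
  "shortest_routes p x y = {vs. is_route p x y vs \<and> length vs = l1dist x y + 1}"

definition min_turn_routes :: "nat \<Rightarrow> vtx \<Rightarrow> vtx \<Rightarrow> vtx list set" where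
  "min_turn_routes p x y =
     {vs \<in> shortest_routes p x y. \<forall>ws \<in> shortest_routes p x y. turns vs \<le> turns ws}"

definition route_segs :: "vtx list \<Rightarrow> (vtx \<times> vtx) set" where
  "route_segs vs = {(vs ! k, vs ! (k + 1)) | k. k + 1 < length vs}"

definition marg :: "nat \<Rightarrow> real \<Rightarrow> nat \<Rightarrow> real" where
  "marg p \<alpha> k = real (p choose k) * Beta (\<alpha> + real k) (\<alpha> + real p - real k) / Beta \<alpha> \<alpha>"

definition endpoint_prob :: "nat \<Rightarrow> real \<Rightarrow> vtx \<Rightarrow> real" where
  "endpoint_prob p \<alpha> v = marg p \<alpha> (nat (fst v)) * marg p \<alpha> (nat (snd v))"

definition seg_prob :: "nat \<Rightarrow> real \<Rightarrow> vtx \<times> vtx \<Rightarrow> real" where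
  "seg_prob p \<alpha> s = (\<Sum>x\<in>grid p. \<Sum>y\<in>grid p.
      endpoint_prob p \<alpha> x * endpoint_prob p \<alpha> y *
      (real (card {vs \<in> min_turn_routes p x y. s \<in> route_segs vs})
        / real (card (min_turn_routes p x y))))"

end

theory Submission
  imports Defs "HOL-Real_Asymp.Real_Asymp"
begin

lemma Beta_pos_real: "a > 0 \<Longrightarrow> b > 0 \<Longrightarrow> Beta a b > (0::real)"
  by (simp add: Beta_def)

lemma pos_nonpos_Ints: "(r::real) > 0 \<Longrightarrow> r \<notin> \<int>\<^sub>\<le>\<^sub>0"
  by (auto elim!: nonpos_Ints_cases)

lemma beta_sum:
  fixes \<alpha> :: real assumes a: "\<alpha> > 0"
  shows "(\<Sum>k\<le>p. real (p choose k) * Beta (\<alpha> + real k) (\<alpha> + real p - real k)) = Beta \<alpha> \<alpha>"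
proof (induction p)
  case 0
  then show ?case by simp
next
  case (Suc p)
  have nn: "\<And>r::real. r > 0 \<Longrightarrow> r \<notin> \<int>\<^sub>\<le>\<^sub>0" by (auto elim!: nonpos_Ints_cases)
  have B: "Beta (\<alpha> + real k + 1) (\<alpha> + real p - real k) + Beta (\<alpha> + real k) (\<alpha> + real p - real k + 1)
      = Beta (\<alpha> + real k) (\<alpha> + real p - real k)" if "k \<le> p" for k
    using Beta_plus1_plus1[OF nn nn, of "\<alpha> + real k" "\<alpha> + real p - real k"] a that by auto
  have e1: "(\<Sum>k\<le>Suc p. real (Suc p choose k) * Beta (\<alpha> + real k) (\<alpha> + real (Suc p) - real k))
     = Beta \<alpha> (\<alpha> + real p + 1) + (\<Sum>k\<le>p. real (Suc p choose Suc k) * Beta (\<alpha> + real k + 1) (\<alpha> + real p - real k))"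
    by (subst sum.atMost_Suc_shift) (simp add: algebra_simps)
  have e2: "(\<Sum>k\<le>p. real (Suc p choose Suc k) * Beta (\<alpha> + real k + 1) (\<alpha> + real p - real k))
     = (\<Sum>k\<le>p. real (p choose k) * Beta (\<alpha> + real k + 1) (\<alpha> + real p - real k))
       + (\<Sum>k\<le>p. real (p choose Suc k) * Beta (\<alpha> + real k + 1) (\<alpha> + real p - real k))"
    by (simp add: sum.distrib algebra_simps)
  have e3: "Beta \<alpha> (\<alpha> + real p + 1) + (\<Sum>k\<le>p. real (p choose Suc k) * Beta (\<alpha> + real k + 1) (\<alpha> + real p - real k))
     = (\<Sum>k\<le>Suc p. real (p choose k) * Beta (\<alpha> + real k) (\<alpha> + real p - real k + 1))"
    by (subst sum.atMost_Suc_shift) (simp add: algebra_simps)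
  have e4: "(\<Sum>k\<le>Suc p. real (p choose k) * Beta (\<alpha> + real k) (\<alpha> + real p - real k + 1)) = (\<Sum>k\<le>p. real (p choose k) * Beta (\<alpha> + real k) (\<alpha> + real p - real k + 1))"
    by simp
  have "(\<Sum>k\<le>Suc p. real (Suc p choose k) * Beta (\<alpha> + real k) (\<alpha> + real (Suc p) - real k))
     = (\<Sum>k\<le>p. real (p choose k) * Beta (\<alpha> + real k + 1) (\<alpha> + real p - real k)) + (\<Sum>k\<le>p. real (p choose k) * Beta (\<alpha> + real k) (\<alpha> + real p - real k + 1))"
    using e1 e2 e3 e4 by linarith
  also have "\<dots> = (\<Sum>k\<le>p. real (p choose k) * (Beta (\<alpha> + real k + 1) (\<alpha> + real p - real k) + Beta (\<alpha> + real k) (\<alpha> + real p - real k + 1)))"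
    by (simp add: sum.distrib algebra_simps)
  also have "\<dots> = (\<Sum>k\<le>p. real (p choose k) * Beta (\<alpha> + real k) (\<alpha> + real p - real k))"
    by (intro sum.cong refl) (simp add: B)
  finally show ?case using Suc.IH by simp
qed

lemma marg_sum:
  fixes \<alpha> :: real assumes a: "\<alpha> > 0"
  shows "(\<Sum>k\<le>p. marg p \<alpha> k) = 1"
proof -
  have "Beta \<alpha> \<alpha> > 0" using a by (simp add: Beta_pos_real)
  then show ?thesis unfolding marg_def using beta_sum[OF a, of p]
    by (simp add: sum_divide_distrib[symmetric])
qed

lemma marg_nonneg: "\<alpha> > 0 \<Longrightarrow> k \<le> p \<Longrightarrow> marg p \<alpha> k \<ge> 0"
  unfolding marg_def by (intro divide_nonneg_pos mult_nonneg_nonneg Beta_pos_real less_imp_le) auto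

definition H :: "real \<Rightarrow> nat \<Rightarrow> real" where
  "H c n = Gamma (real n + c) / (fact n * (real n + 1) powr (c - 1))"

lemma H_lim: assumes c: "c > 0" shows "H c \<longlonglongrightarrow> 1"
proof -
  have nn: "c \<notin> \<int>\<^sub>\<le>\<^sub>0" using c by (auto elim!: nonpos_Ints_cases)
  have l1: "(\<lambda>n. Gamma c / Gamma_series c n) \<longlonglongrightarrow> Gamma c / Gamma c"
    by (intro tendsto_intros) (use Gamma_real_pos[OF c] in auto)
  have l2: "(\<lambda>n. exp (c * ln (real n)) / ((c + real n) * (real n + 1) powr (c - 1))) \<longlonglongrightarrow> 1"
    using c by real_asymp
  have "(\<lambda>n. Gamma c / Gamma_series c n * (exp (c * ln (real n)) / ((c + real n) * (real n + 1) powr (c - 1)))) \<longlonglongrightarrow> 1"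
    using tendsto_mult[OF l1 l2] c Gamma_real_pos[OF c] by simp
  moreover have "Gamma c / Gamma_series c n * (exp (c * ln (real n)) / ((c + real n) * (real n + 1) powr (c - 1))) = H c n"
    if "n \<ge> 1" for n
  proof -
    have g: "Gamma c > 0" using c by simp
    have p: "pochhammer c (n+1) = Gamma (c + real (n+1)) / Gamma c"
      using pochhammer_Gamma[OF nn] by simp
    have G1: "Gamma (c + real (n+1)) = (c + real n) * Gamma (real n + c)"
      using Gamma_plus1[OF pos_nonpos_Ints, of "real n + c"] c by (simp add: algebra_simps)
    have pos: "Gamma (real n + c) > 0" using c by simp
    have q: "(real n + 1) powr (c - 1) > 0" "exp (c * ln (real n)) > 0" "(fact n::real) > 0" "c + real n > 0"
      using c by auto
    define Q where "Q = (real n + 1) powr (c - 1)"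
    define E where "E = exp (c * ln (real n))"
    define F where "F = (fact n :: real)"
    define D where "D = c + real n"
    define GG where "GG = Gamma (real n + c)"
    have "Gamma c / (F * E / (D * GG / Gamma c)) * (E / (D * Q))
       = GG / (F * Q)"
      using q g pos unfolding Q_def[symmetric] E_def[symmetric] F_def[symmetric] D_def[symmetric] GG_def[symmetric]
      by (simp add: field_simps)
    then have "Gamma c / (F * E / ((c + real n) * Gamma (real n + c) / Gamma c)) * (E / ((c + real n) * Q))
       = Gamma (real n + c) / (F * Q)" unfolding D_def GG_def .
    then have "Gamma c / (fact n * E / ((c + real n) * Gamma (real n + c) / Gamma c)) * (E / ((c + real n) * Q))
       = Gamma (real n + c) / (fact n * Q)" unfolding F_def .
    then show ?thesis unfolding H_def Gamma_series_def p G1 Q_def E_def by simp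
  qed
  then have "eventually (\<lambda>n. Gamma c / Gamma_series c n * (exp (c * ln (real n)) / ((c + real n) * (real n + 1) powr (c - 1))) = H c n) sequentially"
    by (intro eventually_sequentiallyI[of 1]) auto
  ultimately show ?thesis by (rule Lim_transform_eventually)
qed

lemma H_pos: "c > 0 \<Longrightarrow> H c n > 0"
  unfolding H_def by simp

lemma H_bounds: assumes c: "c > 0"
  shows "\<exists>L U. L > 0 \<and> U > 0 \<and> (\<forall>n. L \<le> H c n \<and> H c n \<le> U)"
proof -
  have lim: "H c \<longlonglongrightarrow> 1" by (rule H_lim[OF c])
  then have "eventually (\<lambda>n. H c n > 1/2) sequentially"
    by (rule order_tendstoD) simp
  then obtain N where N: "\<And>n. n \<ge> N \<Longrightarrow> H c n > 1/2" by (auto simp: eventually_sequentially)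
  from lim have "bounded (range (H c))" by (rule convergent_imp_bounded)
  then obtain U where U: "\<And>n. \<bar>H c n\<bar> \<le> U" unfolding bounded_iff by auto
  define L where "L = Min (insert (1/2) (H c ` {..<N}))"
  have "L > 0" unfolding L_def using H_pos[OF c] by (subst Min_gr_iff) auto
  moreover have "L \<le> H c n" for n
  proof (cases "n < N")
    case True then show ?thesis unfolding L_def by (intro Min_le) auto
  next
    case False then have "L \<le> 1/2" unfolding L_def by (intro Min_le) auto
    moreover have "1/2 < H c n" using N False by simp
    ultimately show ?thesis by linarith
  qed
  moreover have "U > 0" using U[of 0] H_pos[OF c, of 0] by auto
  ultimately show ?thesis using U by (metis abs_le_D1)
qed

lemma Gamma_H: "c > 0 \<Longrightarrow> Gamma (real n + c) = H c n * fact n * (real n + 1) powr (c - 1)"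
  unfolding H_def by simp

lemma alg_aux:
  fixes fp fk fq a b c x y z B :: real
  assumes "fk \<noteq> 0" "fq \<noteq> 0" "fp \<noteq> 0" "c \<noteq> 0" "z \<noteq> 0"
  shows "fp / (fk * fq) * (a * fk * x * (b * fq * y) / (c * fp * z)) / B = a * b / c * (x * y / z) / B"
  using assms by (simp add: field_simps)

lemma marg_H:
  fixes \<alpha> :: real assumes a: "\<alpha> > 0" and k: "k \<le> p"
  shows "marg p \<alpha> k = H \<alpha> k * H \<alpha> (p - k) / H (2*\<alpha>) p *
     ((real k + 1) powr (\<alpha> - 1) * (real p - real k + 1) powr (\<alpha> - 1) / (real p + 1) powr (2*\<alpha> - 1)) / Beta \<alpha> \<alpha>"
proof -
  have g1: "Gamma (\<alpha> + real k) = H \<alpha> k * fact k * (real k + 1) powr (\<alpha> - 1)"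
    using Gamma_H[OF a, of k] by (simp add: add.commute)
  have g2: "Gamma (\<alpha> + real p - real k) = H \<alpha> (p - k) * fact (p - k) * (real p - real k + 1) powr (\<alpha> - 1)"
    using Gamma_H[OF a, of "p - k"] k by (simp add: of_nat_diff algebra_simps)
  have g3: "Gamma (2*\<alpha> + real p) = H (2*\<alpha>) p * fact p * (real p + 1) powr (2*\<alpha> - 1)"
    using Gamma_H[of "2*\<alpha>" p] a by (simp add: add.commute)
  have ch: "real (p choose k) = fact p / (fact k * fact (p - k))"
    using k by (simp add: binomial_fact)
  have h: "H (2*\<alpha>) p > 0" using H_pos a by simp
  have pw: "(real p + 1) powr (2*\<alpha> - 1) > 0" by simp
  have s: "\<alpha> + real k + (\<alpha> + real p - real k) = 2*\<alpha> + real p" by simp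
  show ?thesis unfolding marg_def Beta_def[of "\<alpha> + real k"] s g1 g2 g3 ch
    using h pw by (intro alg_aux) auto
qed

lemma W_upper:
  fixes \<alpha> :: real assumes a: "\<alpha> > 0" "\<alpha> \<le> 1" and k: "k \<le> p"
  shows "(real k + 1) powr (\<alpha> - 1) * (real p - real k + 1) powr (\<alpha> - 1) / (real p + 1) powr (2*\<alpha> - 1)
     \<le> 2 * (real p + 1) powr (-\<alpha>)"
proof -
  have key: "x powr (\<alpha> - 1) * y powr (\<alpha> - 1) \<le> 2 * (real p + 1) powr (\<alpha> - 1)"
    if xy: "x \<ge> 1" "y \<ge> 1" "x \<ge> (real p + 1) / 2" for x y :: real
  proof -
    have "y powr (\<alpha> - 1) \<le> 1 powr (\<alpha> - 1)" using xy a by (intro powr_mono2') auto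
    then have y1: "y powr (\<alpha> - 1) \<le> 1" by simp
    have "x powr (\<alpha> - 1) \<le> ((real p + 1) / 2) powr (\<alpha> - 1)" using xy a by (intro powr_mono2') auto
    also have "\<dots> = (real p + 1) powr (\<alpha> - 1) * 2 powr (1 - \<alpha>)"
    proof -
      have "((real p + 1) / 2) powr (\<alpha> - 1) = (real p + 1) powr (\<alpha> - 1) / 2 powr (\<alpha> - 1)"
        using powr_divide[of "real p + 1" 2 "\<alpha> - 1"] by simp
      moreover have "(2::real) powr (1 - \<alpha>) = 1 / 2 powr (\<alpha> - 1)"
        using powr_minus_divide[of 2 "\<alpha> - 1"] by simp
      ultimately show ?thesis by simp
    qed
    also have "\<dots> \<le> (real p + 1) powr (\<alpha> - 1) * 2"
    proof -
      have "(2::real) powr (1 - \<alpha>) \<le> 2 powr 1" using a by (intro powr_mono) auto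
      then show ?thesis by (intro mult_left_mono) auto
    qed
    finally have "x powr (\<alpha> - 1) \<le> 2 * (real p + 1) powr (\<alpha> - 1)" by simp
    moreover have "y powr (\<alpha> - 1) \<ge> 0" by simp
    ultimately have "x powr (\<alpha> - 1) * y powr (\<alpha> - 1) \<le> 2 * (real p + 1) powr (\<alpha> - 1) * 1"
      using y1 by (intro mult_mono) auto
    then show ?thesis by simp
  qed
  have "(real k + 1) powr (\<alpha> - 1) * (real p - real k + 1) powr (\<alpha> - 1) \<le> 2 * (real p + 1) powr (\<alpha> - 1)"
  proof (cases "real k + 1 \<ge> (real p + 1) / 2")
    case True then show ?thesis using k by (intro key) auto
  next
    case False then show ?thesis using k key[of "real p - real k + 1" "real k + 1"] by (simp add: mult.commute)
  qed
  then have "(real k + 1) powr (\<alpha> - 1) * (real p - real k + 1) powr (\<alpha> - 1) / (real p + 1) powr (2*\<alpha> - 1)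
     \<le> 2 * (real p + 1) powr (\<alpha> - 1) / (real p + 1) powr (2*\<alpha> - 1)"
    by (intro divide_right_mono) auto
  also have "\<dots> = 2 * ((real p + 1) powr (\<alpha> - 1) / (real p + 1) powr (2*\<alpha> - 1))" by simp
  also have "(real p + 1) powr (\<alpha> - 1) / (real p + 1) powr (2*\<alpha> - 1) = (real p + 1) powr ((\<alpha> - 1) - (2*\<alpha> - 1))"
    by (simp only: powr_diff)
  also have "(\<alpha> - 1) - (2*\<alpha> - 1) = -\<alpha>" by simp
  finally show ?thesis .
qed

lemma W_lower:
  fixes \<alpha> :: real assumes a: "\<alpha> > 0" "\<alpha> \<le> 1" and k: "k \<le> p"
  shows "(real k + 1) powr (\<alpha> - 1) * (real p - real k + 1) powr (\<alpha> - 1) / (real p + 1) powr (2*\<alpha> - 1)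
     \<ge> 1 / (real p + 1)"
proof -
  have x: "(real k + 1) powr (\<alpha> - 1) \<ge> (real p + 1) powr (\<alpha> - 1)" using a k by (intro powr_mono2') auto
  have y: "(real p - real k + 1) powr (\<alpha> - 1) \<ge> (real p + 1) powr (\<alpha> - 1)" using a k by (intro powr_mono2') auto
  have "1 / (real p + 1) = (real p + 1) powr (\<alpha> - 1) * (real p + 1) powr (\<alpha> - 1) / (real p + 1) powr (2*\<alpha> - 1)"
  proof -
    have "(real p + 1) powr (\<alpha> - 1) * (real p + 1) powr (\<alpha> - 1) / (real p + 1) powr (2*\<alpha> - 1)
       = (real p + 1) powr ((\<alpha> - 1) + (\<alpha> - 1) - (2*\<alpha> - 1))"
      by (simp only: powr_add powr_diff)
    also have "(\<alpha> - 1) + (\<alpha> - 1) - (2*\<alpha> - 1) = - 1" by simp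
    finally show ?thesis by (simp add: powr_minus_divide)
  qed
  also have "\<dots> \<le> (real k + 1) powr (\<alpha> - 1) * (real p - real k + 1) powr (\<alpha> - 1) / (real p + 1) powr (2*\<alpha> - 1)"
    using x y by (intro divide_right_mono mult_mono) auto
  finally show ?thesis .
qed

lemma W_end:
  fixes \<alpha> :: real
  shows "(real 0 + 1) powr (\<alpha> - 1) * (real p - real 0 + 1) powr (\<alpha> - 1) / (real p + 1) powr (2*\<alpha> - 1)
     = (real p + 1) powr (-\<alpha>)"
    "(real p + 1) powr (\<alpha> - 1) * (real p - real p + 1) powr (\<alpha> - 1) / (real p + 1) powr (2*\<alpha> - 1)
     = (real p + 1) powr (-\<alpha>)"
proof -
  have e: "(real p + 1) powr (\<alpha> - 1) / (real p + 1) powr (2*\<alpha> - 1) = (real p + 1) powr ((\<alpha> - 1) - (2*\<alpha> - 1))"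
    by (simp only: powr_diff)
  have "(\<alpha> - 1) - (2*\<alpha> - 1) = -\<alpha>" by simp
  with e show "(real 0 + 1) powr (\<alpha> - 1) * (real p - real 0 + 1) powr (\<alpha> - 1) / (real p + 1) powr (2*\<alpha> - 1)
     = (real p + 1) powr (-\<alpha>)"
    "(real p + 1) powr (\<alpha> - 1) * (real p - real p + 1) powr (\<alpha> - 1) / (real p + 1) powr (2*\<alpha> - 1)
     = (real p + 1) powr (-\<alpha>)" by simp_all
qed

lemma marg_bounds:
  fixes \<alpha> :: real assumes a: "\<alpha> > 0" "\<alpha> \<le> 1"
  shows "\<exists>K>0. \<exists>L>0. (\<forall>p k. k \<le> p \<longrightarrow> marg p \<alpha> k \<le> K * (real p + 1) powr (-\<alpha>) \<and> marg p \<alpha> k \<ge> L / (real p + 1))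
     \<and> (\<forall>p. marg p \<alpha> 0 \<ge> L * (real p + 1) powr (-\<alpha>) \<and> marg p \<alpha> p \<ge> L * (real p + 1) powr (-\<alpha>))"
proof -
  obtain L1 U1 where b1: "L1 > 0" "U1 > 0" "\<And>n. L1 \<le> H \<alpha> n \<and> H \<alpha> n \<le> U1" using H_bounds[of \<alpha>] a by auto
  obtain L2 U2 where b2: "L2 > 0" "U2 > 0" "\<And>n. L2 \<le> H (2*\<alpha>) n \<and> H (2*\<alpha>) n \<le> U2" using H_bounds[of "2*\<alpha>"] a by auto
  define B where "B = Beta \<alpha> \<alpha>"
  have B: "B > 0" unfolding B_def using a by (simp add: Beta_pos_real)
  define K where "K = U1 * U1 / L2 * 2 / B"
  define L where "L = L1 * L1 / U2 / B"
  define W where "W = (\<lambda>p k. (real k + 1) powr (\<alpha> - 1) * (real p - real k + 1) powr (\<alpha> - 1) / (real p + 1) powr (2*\<alpha> - 1))"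
  have Wpos: "W p k \<ge> 0" for p k unfolding W_def by simp
  have mH: "marg p \<alpha> k = H \<alpha> k * H \<alpha> (p - k) / H (2*\<alpha>) p * W p k / B" if "k \<le> p" for p k
    using marg_H[OF a(1) that] unfolding W_def B_def by simp
  have up: "marg p \<alpha> k \<le> K * (real p + 1) powr (-\<alpha>)" if k: "k \<le> p" for p k
  proof -
    have "H \<alpha> k * H \<alpha> (p - k) / H (2*\<alpha>) p \<le> U1 * U1 / L2"
      using b1 b2 H_pos a by (intro frac_le mult_mono) (auto intro: less_imp_le)
    moreover have "W p k \<le> 2 * (real p + 1) powr (-\<alpha>)" unfolding W_def using W_upper[OF a k] .
    ultimately have "H \<alpha> k * H \<alpha> (p - k) / H (2*\<alpha>) p * W p k \<le> U1 * U1 / L2 * (2 * (real p + 1) powr (-\<alpha>))"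
      using Wpos b1 b2 by (intro mult_mono) auto
    then have "H \<alpha> k * H \<alpha> (p - k) / H (2*\<alpha>) p * W p k / B \<le> U1 * U1 / L2 * (2 * (real p + 1) powr (-\<alpha>)) / B"
      using B by (intro divide_right_mono) auto
    moreover have "U1 * U1 / L2 * (2 * (real p + 1) powr (-\<alpha>)) / B = K * (real p + 1) powr (-\<alpha>)"
      unfolding K_def by simp
    ultimately show ?thesis unfolding mH[OF k] by simp
  qed
  have HL: "H \<alpha> k * H \<alpha> (p - k) / H (2*\<alpha>) p \<ge> L1 * L1 / U2" for p k
    using b1 b2 H_pos a by (intro frac_le mult_mono) (auto intro: less_imp_le)
  have Hq: "H \<alpha> k * H \<alpha> (p - k) / H (2*\<alpha>) p \<ge> 0" for p k
    using H_pos a by (intro divide_nonneg_pos mult_nonneg_nonneg) (auto intro: less_imp_le)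
  have lo: "marg p \<alpha> k \<ge> L / (real p + 1)" if k: "k \<le> p" for p k
  proof -
    have "W p k \<ge> 1 / (real p + 1)" unfolding W_def using W_lower[OF a k] .
    then have "H \<alpha> k * H \<alpha> (p - k) / H (2*\<alpha>) p * W p k \<ge> L1 * L1 / U2 * (1 / (real p + 1))"
      using HL Hq b1 b2 by (intro mult_mono) auto
    then have "L1 * L1 / U2 * (1 / (real p + 1)) / B \<le> H \<alpha> k * H \<alpha> (p - k) / H (2*\<alpha>) p * W p k / B"
      using B by (intro divide_right_mono) auto
    moreover have "L1 * L1 / U2 * (1 / (real p + 1)) / B = L / (real p + 1)" unfolding L_def by simp
    ultimately show ?thesis unfolding mH[OF k] by simp
  qed
  have e0: "marg p \<alpha> 0 \<ge> L * (real p + 1) powr (-\<alpha>)" for p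
  proof -
    have "W p 0 = (real p + 1) powr (-\<alpha>)" unfolding W_def using W_end(1)[of \<alpha> p] by simp
    then have "H \<alpha> 0 * H \<alpha> (p - 0) / H (2*\<alpha>) p * W p 0 \<ge> L1 * L1 / U2 * (real p + 1) powr (-\<alpha>)"
      using HL[of 0 p] Hq[of 0 p] b1 b2 by (intro mult_mono) auto
    then have "L1 * L1 / U2 * (real p + 1) powr (-\<alpha>) / B \<le> H \<alpha> 0 * H \<alpha> (p - 0) / H (2*\<alpha>) p * W p 0 / B"
      using B by (intro divide_right_mono) auto
    moreover have "L1 * L1 / U2 * (real p + 1) powr (-\<alpha>) / B = L * (real p + 1) powr (-\<alpha>)" unfolding L_def by simp
    ultimately show ?thesis unfolding mH[OF le0] by simp
  qed
  have ep: "marg p \<alpha> p \<ge> L * (real p + 1) powr (-\<alpha>)" for p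
  proof -
    have "W p p = (real p + 1) powr (-\<alpha>)" unfolding W_def using W_end(2)[where \<alpha>=\<alpha> and p=p] by simp
    then have "H \<alpha> p * H \<alpha> (p - p) / H (2*\<alpha>) p * W p p \<ge> L1 * L1 / U2 * (real p + 1) powr (-\<alpha>)"
      using HL[of p p] Hq[of p p] b1 b2 by (intro mult_mono) auto
    then have "L1 * L1 / U2 * (real p + 1) powr (-\<alpha>) / B \<le> H \<alpha> p * H \<alpha> (p - p) / H (2*\<alpha>) p * W p p / B"
      using B by (intro divide_right_mono) auto
    moreover have "L1 * L1 / U2 * (real p + 1) powr (-\<alpha>) / B = L * (real p + 1) powr (-\<alpha>)" unfolding L_def by simp
    ultimately show ?thesis unfolding mH[OF order_refl] by simp
  qed
  have "K > 0" "L > 0" unfolding K_def L_def using b1 b2 B by auto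
  then show ?thesis using up lo e0 ep by blast
qed

definition stp :: "vtx list \<Rightarrow> nat \<Rightarrow> int \<times> int" where
  "stp vs t = (fst (vs ! (t + 1)) - fst (vs ! t), snd (vs ! (t + 1)) - snd (vs ! t))"

definition TS :: "vtx list \<Rightarrow> nat set" where
  "TS vs = {k. 0 < k \<and> k + 1 < length vs \<and> stp vs k \<noteq> stp vs (k - 1)}"

lemma turns_TS: "turns vs = card (TS vs)"
  unfolding turns_def TS_def stp_def
  by (intro arg_cong[where f=card] Collect_cong) auto

lemma TS_finite: "finite (TS vs)"
  by (rule finite_subset[of _ "{..<length vs}"]) (auto simp: TS_def)

lemma change_point:
  "b + 1 < length vs \<Longrightarrow> a < b \<Longrightarrow> stp vs a \<noteq> stp vs b \<Longrightarrow> \<exists>t. a < t \<and> t \<le> b \<and> t \<in> TS vs"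
proof (induction b)
  case 0 then show ?case by simp
next
  case (Suc b)
  show ?case
  proof (cases "stp vs b = stp vs (Suc b)")
    case True
    have "a \<noteq> b" using True Suc.prems by auto
    then have "a < b" using Suc.prems by simp
    then obtain t where "a < t" "t \<le> b" "t \<in> TS vs" using Suc.IH Suc.prems True by auto
    then show ?thesis by auto
  next
    case False
    then have "Suc b \<in> TS vs" using Suc.prems unfolding TS_def by auto
    then show ?thesis using Suc.prems by auto
  qed
qed

lemma one_turn:
  assumes "turns vs \<le> 1"
  shows "\<exists>m d1 d2. \<forall>t. t + 1 < length vs \<longrightarrow> stp vs t = (if t < m then d1 else d2)"
proof (cases "\<exists>t. t + 1 < length vs \<and> stp vs t \<noteq> stp vs 0")
  case False
  then have "\<forall>t. t + 1 < length vs \<longrightarrow> stp vs t = stp vs 0" by blast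
  then show ?thesis by (intro exI[of _ "0::nat"] exI[of _ "stp vs 0"] exI[of _ "stp vs 0"]) (simp only: if_cancel)
next
  case True
  define m where "m = (LEAST t. t + 1 < length vs \<and> stp vs t \<noteq> stp vs 0)"
  have m: "m + 1 < length vs" "stp vs m \<noteq> stp vs 0"
    using LeastI_ex[OF True] unfolding m_def by auto
  have before: "stp vs t = stp vs 0" if "t < m" for t
    using not_less_Least[OF that[unfolded m_def]] that m(1) by (metis Suc_eq_plus1 Suc_lessD less_trans_Suc)
  have m0: "m > 0" using m(2) by (cases m) auto
  have mTS: "m \<in> TS vs" unfolding TS_def using m m0 before[of "m - 1"] by auto
  have after: "stp vs t = stp vs m" if mt: "m \<le> t" and tl: "t + 1 < length vs" for t
  proof (rule ccontr)
    assume ne: "stp vs t \<noteq> stp vs m"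
    then have "m < t" using mt by (cases "m = t") auto
    then obtain t' where t': "m < t'" "t' \<le> t" "t' \<in> TS vs"
      using change_point[OF tl _ ne[symmetric]] \<open>m < t\<close> by auto
    have "{m, t'} \<subseteq> TS vs" using mTS t' by auto
    then have "card {m, t'} \<le> card (TS vs)" by (intro card_mono TS_finite)
    moreover have "card {m, t'} = 2" using t' by auto
    ultimately show False using assms turns_TS[of vs] by simp
  qed
  show ?thesis
  proof -
    have "\<forall>t. t + 1 < length vs \<longrightarrow> stp vs t = (if t < m then stp vs 0 else stp vs m)"
    proof (intro allI impI)
      fix t assume t: "t + 1 < length vs"
      show "stp vs t = (if t < m then stp vs 0 else stp vs m)"
      proof (cases "t < m")
        case True then show ?thesis using before[OF True] by simp
      next
        case False then show ?thesis using after[of t] t by simp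
      qed
    qed
    then show ?thesis by blast
  qed
qed

definition pt :: "vtx \<Rightarrow> nat \<Rightarrow> int \<times> int \<Rightarrow> int \<times> int \<Rightarrow> nat \<Rightarrow> vtx" where
  "pt x m d1 d2 k = (fst x + int (min k m) * fst d1 + int (k - min k m) * fst d2,
                     snd x + int (min k m) * snd d1 + int (k - min k m) * snd d2)"

definition path2 :: "vtx \<Rightarrow> nat \<Rightarrow> int \<times> int \<Rightarrow> int \<times> int \<Rightarrow> nat \<Rightarrow> vtx list" where
  "path2 x m d1 d2 n = map (pt x m d1 d2) [0..<Suc n]"

lemma position:
  assumes "vs \<noteq> []" "\<forall>t. t + 1 < length vs \<longrightarrow> stp vs t = (if t < m then d1 else d2)"
  shows "k < length vs \<Longrightarrow> vs ! k = pt (hd vs) m d1 d2 k"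
proof (induction k)
  case 0 then show ?case using assms(1) by (simp add: pt_def hd_conv_nth)
next
  case (Suc k)
  then have IH: "vs ! k = pt (hd vs) m d1 d2 k" by simp
  have s: "stp vs k = (if k < m then d1 else d2)" using assms(2) Suc.prems by simp
  have "vs ! Suc k = (fst (vs ! k) + fst (stp vs k), snd (vs ! k) + snd (stp vs k))"
    unfolding stp_def by simp
  also have "\<dots> = pt (hd vs) m d1 d2 (Suc k)"
  proof (cases "k < m")
    case True
    then have "min (Suc k) m = Suc k" "min k m = k" by auto
    then show ?thesis unfolding IH s using True by (simp add: pt_def algebra_simps)
  next
    case False
    then have "min (Suc k) m = m" "min k m = m" "Suc k - m = Suc (k - m)" by auto
    then show ?thesis unfolding IH s using False by (simp add: pt_def algebra_simps)
  qed
  finally show ?case .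
qed

lemma vs_path2:
  assumes "vs \<noteq> []" "\<forall>t. t + 1 < length vs \<longrightarrow> stp vs t = (if t < m then d1 else d2)"
  shows "vs = path2 (hd vs) m d1 d2 (length vs - 1)"
  using position[OF assms] assms(1) by (intro nth_equalityI) (auto simp: path2_def simp del: upt_Suc)

definition unit :: "int \<times> int \<Rightarrow> bool" where
  "unit d \<longleftrightarrow> \<bar>fst d\<bar> + \<bar>snd d\<bar> = 1"

lemma path2_length [simp]: "length (path2 x m d1 d2 n) = Suc n"
  by (simp add: path2_def)

lemma path2_nth: "k \<le> n \<Longrightarrow> path2 x m d1 d2 n ! k = pt x m d1 d2 k"
  unfolding path2_def by (simp del: upt_Suc add: nth_map_upt)

lemma pt0 [simp]: "pt x m d1 d2 0 = x"
  by (simp add: pt_def)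

lemma path2_ne: "path2 x m d1 d2 n \<noteq> []"
  using path2_length[of x m d1 d2 n] by (metis Zero_not_Suc list.size(3))

lemma path2_hd: "hd (path2 x m d1 d2 n) = x"
  using path2_nth[of 0 n x m d1 d2] path2_ne[of x m d1 d2 n] by (simp add: hd_conv_nth)

lemma path2_last: "last (path2 x m d1 d2 n) = pt x m d1 d2 n"
  using path2_nth[of n n x m d1 d2] path2_ne[of x m d1 d2 n] by (simp add: last_conv_nth)

lemma pt_Suc: "pt x m d1 d2 (Suc k) = (fst (pt x m d1 d2 k) + fst (if k < m then d1 else d2),
                                      snd (pt x m d1 d2 k) + snd (if k < m then d1 else d2))"
proof (cases "k < m")
  case True
  then have "min (Suc k) m = Suc k" "min k m = k" by auto
  then show ?thesis using True by (simp add: pt_def algebra_simps)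
next
  case False
  then have "min (Suc k) m = m" "min k m = m" "Suc k - m = Suc (k - m)" by auto
  then show ?thesis using False by (simp add: pt_def algebra_simps)
qed

lemma path2_stp: "t < n \<Longrightarrow> stp (path2 x m d1 d2 n) t = (if t < m then d1 else d2)"
  unfolding stp_def using path2_nth[of t n] path2_nth[of "Suc t" n] pt_Suc[of x m d1 d2 t]
  by auto

lemma path2_turns: "turns (path2 x m d1 d2 n) \<le> 1"
proof -
  have "TS (path2 x m d1 d2 n) \<subseteq> {m}"
  proof
    fix k assume k: "k \<in> TS (path2 x m d1 d2 n)"
    then have k0: "0 < k" "k < n" and ne: "stp (path2 x m d1 d2 n) k \<noteq> stp (path2 x m d1 d2 n) (k - 1)"
      unfolding TS_def by auto
    then show "k \<in> {m}" using path2_stp[of k n] path2_stp[of "k - 1" n]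
      by (cases "k < m"; cases "k - 1 < m") auto
  qed
  then have "card (TS (path2 x m d1 d2 n)) \<le> card {m}" by (intro card_mono) auto
  then show ?thesis by (simp add: turns_TS)
qed

lemma path2_shortest:
  assumes n: "n = l1dist x y" and y: "pt x m d1 d2 n = y"
    and u1: "m > 0 \<Longrightarrow> unit d1" and u2: "m < n \<Longrightarrow> unit d2"
    and g: "\<And>k. k \<le> n \<Longrightarrow> pt x m d1 d2 k \<in> grid p"
  shows "path2 x m d1 d2 n \<in> shortest_routes p x y"
proof -
  have set: "set (path2 x m d1 d2 n) \<subseteq> grid p"
    using g by (auto simp: path2_def simp del: upt_Suc)
  have adj: "adj (path2 x m d1 d2 n ! k) (path2 x m d1 d2 n ! (k + 1))" if "k + 1 < length (path2 x m d1 d2 n)" for k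
  proof -
    have k: "k < n" using that by simp
    have "unit (if k < m then d1 else d2)" using u1 u2 k by auto
    then show ?thesis using path2_nth[of k n] path2_nth[of "Suc k" n] k pt_Suc[of x m d1 d2 k]
      by (auto simp: adj_def unit_def)
  qed
  show ?thesis unfolding shortest_routes_def is_route_def
    using set adj path2_hd path2_last y n path2_ne by auto
qed

lemma between:
  fixes a b j :: int
  assumes "0 \<le> a" "a \<le> P" "0 \<le> b" "b \<le> P" "0 \<le> j" "j \<le> \<bar>b - a\<bar>"
  shows "0 \<le> a + j * sgn (b - a) \<and> a + j * sgn (b - a) \<le> P"
  using assms by (cases "b > a"; cases "b = a") (auto simp: sgn_if)

definition RH :: "vtx \<Rightarrow> vtx \<Rightarrow> vtx list" where
  "RH x y = path2 x (nat \<bar>fst y - fst x\<bar>) (sgn (fst y - fst x), 0) (0, sgn (snd y - snd x)) (l1dist x y)"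

definition RV :: "vtx \<Rightarrow> vtx \<Rightarrow> vtx list" where
  "RV x y = path2 x (nat \<bar>snd y - snd x\<bar>) (0, sgn (snd y - snd x)) (sgn (fst y - fst x), 0) (l1dist x y)"

lemma RH_shortest:
  assumes x: "x \<in> grid p" and y: "y \<in> grid p"
  shows "RH x y \<in> shortest_routes p x y"
  unfolding RH_def
proof (rule path2_shortest[OF refl])
  let ?m = "nat \<bar>fst y - fst x\<bar>"
  have nm: "l1dist x y = ?m + nat \<bar>snd y - snd x\<bar>" unfolding l1dist_def by (simp add: nat_add_distrib)
  show "pt x ?m (sgn (fst y - fst x), 0) (0, sgn (snd y - snd x)) (l1dist x y) = y"
    unfolding pt_def nm by (simp add: abs_mult_sgn prod_eq_iff sgn_mult_abs mult.commute)
  show "unit (sgn (fst y - fst x), 0)" if "?m > 0" using that by (auto simp: unit_def sgn_if)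
  show "unit (0, sgn (snd y - snd x))" if "?m < l1dist x y" using that nm by (auto simp: unit_def sgn_if)
  show "pt x ?m (sgn (fst y - fst x), 0) (0, sgn (snd y - snd x)) k \<in> grid p" if k: "k \<le> l1dist x y" for k
  proof -
    have "0 \<le> int (min k ?m) \<and> int (min k ?m) \<le> \<bar>fst y - fst x\<bar>" by auto
    then have A: "0 \<le> fst x + int (min k ?m) * sgn (fst y - fst x) \<and> fst x + int (min k ?m) * sgn (fst y - fst x) \<le> int p"
      using x y by (intro between) (auto simp: grid_def)
    have "k - min k ?m \<le> nat \<bar>snd y - snd x\<bar>" using k nm by linarith
    then have "int (k - min k ?m) \<le> \<bar>snd y - snd x\<bar>" by linarith
    then have "0 \<le> int (k - min k ?m) \<and> int (k - min k ?m) \<le> \<bar>snd y - snd x\<bar>" by simp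
    then have B: "0 \<le> snd x + int (k - min k ?m) * sgn (snd y - snd x) \<and> snd x + int (k - min k ?m) * sgn (snd y - snd x) \<le> int p"
      using x y by (intro between) (auto simp: grid_def)
    show ?thesis using A B unfolding pt_def grid_def by auto
  qed
qed

lemma RV_shortest:
  assumes x: "x \<in> grid p" and y: "y \<in> grid p"
  shows "RV x y \<in> shortest_routes p x y"
  unfolding RV_def
proof (rule path2_shortest[OF refl])
  let ?m = "nat \<bar>snd y - snd x\<bar>"
  have nm: "l1dist x y = ?m + nat \<bar>fst y - fst x\<bar>" unfolding l1dist_def by (simp add: nat_add_distrib)
  show "pt x ?m (0, sgn (snd y - snd x)) (sgn (fst y - fst x), 0) (l1dist x y) = y"
    unfolding pt_def nm by (simp add: abs_mult_sgn prod_eq_iff sgn_mult_abs mult.commute)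
  show "unit (0, sgn (snd y - snd x))" if "?m > 0" using that by (auto simp: unit_def sgn_if)
  show "unit (sgn (fst y - fst x), 0)" if "?m < l1dist x y" using that nm by (auto simp: unit_def sgn_if)
  show "pt x ?m (0, sgn (snd y - snd x)) (sgn (fst y - fst x), 0) k \<in> grid p" if k: "k \<le> l1dist x y" for k
  proof -
    have "0 \<le> int (min k ?m) \<and> int (min k ?m) \<le> \<bar>snd y - snd x\<bar>" by auto
    then have A: "0 \<le> snd x + int (min k ?m) * sgn (snd y - snd x) \<and> snd x + int (min k ?m) * sgn (snd y - snd x) \<le> int p"
      using x y by (intro between) (auto simp: grid_def)
    have "k - min k ?m \<le> nat \<bar>fst y - fst x\<bar>" using k nm by linarith
    then have "int (k - min k ?m) \<le> \<bar>fst y - fst x\<bar>" by linarith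
    then have "0 \<le> int (k - min k ?m) \<and> int (k - min k ?m) \<le> \<bar>fst y - fst x\<bar>" by simp
    then have B: "0 \<le> fst x + int (k - min k ?m) * sgn (fst y - fst x) \<and> fst x + int (k - min k ?m) * sgn (fst y - fst x) \<le> int p"
      using x y by (intro between) (auto simp: grid_def)
    show ?thesis using A B unfolding pt_def grid_def by auto
  qed
qed

lemma RH_turns: "turns (RH x y) \<le> 1" unfolding RH_def by (rule path2_turns)
lemma RV_turns: "turns (RV x y) \<le> 1" unfolding RV_def by (rule path2_turns)

lemma route_basic:
  assumes "vs \<in> shortest_routes p x y"
  shows "vs \<noteq> []" "hd vs = x" "last vs = y" "length vs = Suc (l1dist x y)"
    "\<And>t. t + 1 < length vs \<Longrightarrow> unit (stp vs t)" "set vs \<subseteq> grid p"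
  using assms unfolding shortest_routes_def is_route_def stp_def unit_def adj_def
  by (auto simp: abs_minus_commute)

lemma M_turns:
  assumes x: "x \<in> grid p" and y: "y \<in> grid p" and vs: "vs \<in> min_turn_routes p x y"
  shows "turns vs \<le> 1"
  using vs RH_shortest[OF x y] RH_turns[of x y] unfolding min_turn_routes_def by force

lemma M_path2:
  assumes x: "x \<in> grid p" and y: "y \<in> grid p" and vs: "vs \<in> min_turn_routes p x y"
  obtains m d1 d2 where "vs = path2 x m d1 d2 (l1dist x y)"
    "\<And>t. t < l1dist x y \<Longrightarrow> stp vs t = (if t < m then d1 else d2)"
proof -
  have sh: "vs \<in> shortest_routes p x y" using vs unfolding min_turn_routes_def by auto
  obtain m d1 d2 where st: "\<forall>t. t + 1 < length vs \<longrightarrow> stp vs t = (if t < m then d1 else d2)"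
    using one_turn[OF M_turns[OF x y vs]] by blast
  have "vs = path2 (hd vs) m d1 d2 (length vs - 1)" by (rule vs_path2[OF route_basic(1)[OF sh] st])
  then have "vs = path2 x m d1 d2 (l1dist x y)" using route_basic[OF sh] by simp
  moreover have "\<And>t. t < l1dist x y \<Longrightarrow> stp vs t = (if t < m then d1 else d2)"
    using st route_basic(4)[OF sh] by simp
  ultimately show ?thesis using that by blast
qed

lemma seg_coord:
  assumes x: "x \<in> grid p" and y: "y \<in> grid p" and vs: "vs \<in> min_turn_routes p x y"
    and s: "(u, v) \<in> route_segs vs"
  shows "(snd u = snd v \<longrightarrow> snd u = snd x \<or> snd u = snd y) \<and> (fst u = fst v \<longrightarrow> fst u = fst x \<or> fst u = fst y)"
proof -
  obtain m d1 d2 where P: "vs = path2 x m d1 d2 (l1dist x y)"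
    and st: "\<And>t. t < l1dist x y \<Longrightarrow> stp vs t = (if t < m then d1 else d2)"
    using M_path2[OF x y vs] by blast
  define n where "n = l1dist x y"
  obtain k where k: "k + 1 < length vs" "u = vs ! k" "v = vs ! (k + 1)"
    using s unfolding route_segs_def by auto
  have kn: "k < n" using k(1) P n_def by simp
  have u: "u = pt x m d1 d2 k" using k P path2_nth[of k n] kn n_def by simp
  have v: "v = pt x m d1 d2 (Suc k)" using k P path2_nth[of "Suc k" n] kn n_def by simp
  have sh: "vs \<in> shortest_routes p x y" using vs unfolding min_turn_routes_def by auto
  have yy: "y = pt x m d1 d2 n" using route_basic(3)[OF sh] P path2_last n_def by metis
  show ?thesis
  proof (cases "k < m")
    case True
    then have "min k m = k" by simp
    then have uu: "u = (fst x + int k * fst d1, snd x + int k * snd d1)" using u by (simp add: pt_def)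
    have vv: "v = (fst u + fst d1, snd u + snd d1)" using v u pt_Suc[of x m d1 d2 k] True by simp
    show ?thesis using uu vv by auto
  next
    case False
    then have "min k m = m" "min n m = m" using kn by auto
    then have uu: "u = (fst x + int m * fst d1 + int (k - m) * fst d2, snd x + int m * snd d1 + int (k - m) * snd d2)"
      and yv: "y = (fst x + int m * fst d1 + int (n - m) * fst d2, snd x + int m * snd d1 + int (n - m) * snd d2)"
      using u yy by (simp_all add: pt_def)
    have vv: "v = (fst u + fst d2, snd u + snd d2)" using v u pt_Suc[of x m d1 d2 k] False by simp
    show ?thesis using uu vv yv by auto
  qed
qed

lemma unit_cases: "unit d \<Longrightarrow> d = (1, 0) \<or> d = (-1, 0) \<or> d = (0, 1) \<or> d = (0, -1)"
  unfolding unit_def by (cases d) auto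

lemma L_arith:
  fixes a1 b1 a2 b2 D1 D2 :: int and m n :: nat
  assumes u1: "unit (a1, b1)" and u2: "unit (a2, b2)" and mn: "0 < m" "m < n"
    and D1: "D1 = int m * a1 + int (n - m) * a2" and D2: "D2 = int m * b1 + int (n - m) * b2"
    and nz: "D1 \<noteq> 0" "D2 \<noteq> 0"
  shows "(a1 = sgn D1 \<and> b1 = 0 \<and> a2 = 0 \<and> b2 = sgn D2 \<and> m = nat \<bar>D1\<bar>) \<or>
         (a1 = 0 \<and> b1 = sgn D2 \<and> a2 = sgn D1 \<and> b2 = 0 \<and> m = nat \<bar>D2\<bar>)"
proof -
  have nm: "int (n - m) > 0" using mn by simp
  from unit_cases[OF u1] unit_cases[OF u2] show ?thesis
    using mn nm D1 D2 nz by (elim disjE) (auto simp: sgn_if)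
qed

lemma not_straight:
  assumes x: "x \<in> grid p" and y: "y \<in> grid p" and ne: "fst x \<noteq> fst y" "snd x \<noteq> snd y"
    and ws: "ws \<in> shortest_routes p x y"
  shows "turns ws \<ge> 1"
proof (rule ccontr)
  assume "\<not> turns ws \<ge> 1"
  then have "card (TS ws) = 0" by (simp add: turns_TS)
  then have E: "TS ws = {}" using TS_finite by simp
  define n where "n = l1dist x y"
  have len: "length ws = Suc n" using route_basic(4)[OF ws] n_def by simp
  have n0: "n > 0" using ne unfolding n_def l1dist_def by auto
  have st: "\<forall>t. t + 1 < length ws \<longrightarrow> stp ws t = (if t < 0 then stp ws 0 else stp ws 0)"
  proof (intro allI impI)
    fix t assume t: "t + 1 < length ws"
    show "stp ws t = (if t < 0 then stp ws 0 else stp ws 0)"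
    proof (rule ccontr)
      assume "\<not> ?thesis"
      then have "stp ws 0 \<noteq> stp ws t" "0 < t" by (auto intro: Nat.gr0I)
      then show False using change_point[OF t, of 0] E by auto
    qed
  qed
  have "ws = path2 (hd ws) 0 (stp ws 0) (stp ws 0) (length ws - 1)"
    by (rule vs_path2[OF route_basic(1)[OF ws] st])
  then have "ws = path2 x 0 (stp ws 0) (stp ws 0) n" using route_basic(2)[OF ws] len by simp
  then have "y = pt x 0 (stp ws 0) (stp ws 0) n" using route_basic(3)[OF ws] path2_last by metis
  then have yy: "y = (fst x + int n * fst (stp ws 0), snd x + int n * snd (stp ws 0))" by (simp add: pt_def)
  have "unit (stp ws 0)" using route_basic(5)[OF ws, of 0] len n0 by simp
  then show False using unit_cases yy ne n0 by fastforce
qed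

lemma RH_M:
  assumes x: "x \<in> grid p" and y: "y \<in> grid p" and ne: "fst x \<noteq> fst y" "snd x \<noteq> snd y"
  shows "RH x y \<in> min_turn_routes p x y" "RV x y \<in> min_turn_routes p x y"
  unfolding min_turn_routes_def
  using RH_shortest[OF x y] RV_shortest[OF x y] RH_turns[of x y] RV_turns[of x y] not_straight[OF x y ne]
  by force+

lemma M_sub:
  assumes x: "x \<in> grid p" and y: "y \<in> grid p" and ne: "fst x \<noteq> fst y" "snd x \<noteq> snd y"
  shows "min_turn_routes p x y \<subseteq> {RH x y, RV x y}"
proof
  fix vs assume vs: "vs \<in> min_turn_routes p x y"
  obtain m d1 d2 where P: "vs = path2 x m d1 d2 (l1dist x y)"
    and st: "\<And>t. t < l1dist x y \<Longrightarrow> stp vs t = (if t < m then d1 else d2)"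
    using M_path2[OF x y vs] by blast
  define n where "n = l1dist x y"
  have sh: "vs \<in> shortest_routes p x y" using vs unfolding min_turn_routes_def by auto
  have len: "length vs = Suc n" using route_basic(4)[OF sh] n_def by simp
  have n0: "n > 0" using ne unfolding n_def l1dist_def by auto
  have yy: "y = pt x m d1 d2 n" using route_basic(3)[OF sh] P path2_last n_def by metis
  have un: "unit (stp vs t)" if "t < n" for t using route_basic(5)[OF sh, of t] len that by simp
  have D: "fst y - fst x \<noteq> 0" "snd y - snd x \<noteq> 0" using ne by auto
  show "vs \<in> {RH x y, RV x y}"
  proof (cases "m = 0 \<or> n \<le> m")
    case True
    define d where "d = (if m = 0 then d2 else d1)"
    have "stp vs 0 = d" using st[of 0] n0 True unfolding d_def n_def by auto
    then have ud: "unit d" using un[of 0] n0 by simp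
    have "y = (fst x + int n * fst d, snd x + int n * snd d)"
      using yy True unfolding d_def by (auto simp: pt_def min_def)
    then show ?thesis using unit_cases[OF ud] D n0 by auto
  next
    case False
    then have mn: "0 < m" "m < n" by auto
    have u1: "unit d1" using un[of 0] st[of 0] mn n_def by simp
    have nm1: "\<not> (n - 1 < m)" "n - 1 < n" using mn by arith+
    have u2: "unit d2" using un[OF nm1(2)] st[of "n - 1"] nm1 n_def by simp
    have "min n m = m" using mn by simp
    then have D1: "fst y - fst x = int m * fst d1 + int (n - m) * fst d2"
      and D2: "snd y - snd x = int m * snd d1 + int (n - m) * snd d2" using yy by (simp_all add: pt_def)
    have "(fst d1 = sgn (fst y - fst x) \<and> snd d1 = 0 \<and> fst d2 = 0 \<and> snd d2 = sgn (snd y - snd x) \<and> m = nat \<bar>fst y - fst x\<bar>) \<or>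
         (fst d1 = 0 \<and> snd d1 = sgn (snd y - snd x) \<and> fst d2 = sgn (fst y - fst x) \<and> snd d2 = 0 \<and> m = nat \<bar>snd y - snd x\<bar>)"
      using L_arith[of "fst d1" "snd d1" "fst d2" "snd d2" m n, OF _ _ mn D1 D2 D] u1 u2 by simp
    then have "(d1 = (sgn (fst y - fst x), 0) \<and> d2 = (0, sgn (snd y - snd x)) \<and> m = nat \<bar>fst y - fst x\<bar>) \<or>
         (d1 = (0, sgn (snd y - snd x)) \<and> d2 = (sgn (fst y - fst x), 0) \<and> m = nat \<bar>snd y - snd x\<bar>)"
      by (auto simp: prod_eq_iff)
    then show ?thesis unfolding P RH_def RV_def by auto
  qed
qed

lemma frac_half:
  assumes x: "x \<in> grid p" and y: "y \<in> grid p" and ne: "fst x \<noteq> fst y" "snd x \<noteq> snd y"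
    and s: "s \<in> route_segs (RH x y) \<or> s \<in> route_segs (RV x y)"
  shows "real (card {vs \<in> min_turn_routes p x y. s \<in> route_segs vs}) / real (card (min_turn_routes p x y)) \<ge> 1/2"
proof -
  let ?M = "min_turn_routes p x y"
  have M: "?M = {RH x y, RV x y}" using M_sub[OF x y ne] RH_M[OF x y ne] by auto
  have c2: "card ?M \<le> 2" unfolding M by (rule order_trans[OF card_insert_le_m1]) auto
  have "{vs \<in> ?M. s \<in> route_segs vs} \<noteq> {}" using s M by auto
  then have c1: "card {vs \<in> ?M. s \<in> route_segs vs} \<ge> 1" unfolding M
    by (simp add: Suc_leI card_gt_0_iff)
  have cpos: "card ?M > 0" unfolding M by (auto simp: card_gt_0_iff)
  have "1/2 \<le> real 1 / real (card ?M)" using c2 cpos by (simp add: field_simps)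
  also have "\<dots> \<le> real (card {vs \<in> ?M. s \<in> route_segs vs}) / real (card ?M)"
    using c1 cpos by (intro divide_right_mono) auto
  finally show ?thesis .
qed

lemma grid_img: "grid p = (\<lambda>(a, b). (int a, int b)) ` ({..p} \<times> {..p})"
proof -
  have "z \<in> (\<lambda>(a, b). (int a, int b)) ` ({..p} \<times> {..p})" if "z \<in> grid p" for z
  proof -
    obtain a b where z0: "z = (a, b)" by (cases z)
    then have z: "z = (a, b)" "0 \<le> a" "a \<le> int p" "0 \<le> b" "b \<le> int p"
      using that unfolding grid_def by auto
    then show ?thesis by (intro image_eqI[of _ _ "(nat a, nat b)"]) auto
  qed
  then show ?thesis unfolding grid_def by auto
qed

lemma inj_int2: "inj_on (\<lambda>(a::nat, b::nat). (int a, int b)) A"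
  by (auto simp: inj_on_def)

lemma grid_sum: "(\<Sum>x\<in>grid p. g x) = (\<Sum>a\<le>p. \<Sum>b\<le>p. g (int a, int b))"
  unfolding grid_img by (subst sum.reindex[OF inj_int2]) (simp add: sum.cartesian_product split_def)

lemma ep_int: "endpoint_prob p \<alpha> (int a, int b) = marg p \<alpha> a * marg p \<alpha> b"
  by (simp add: endpoint_prob_def)

lemma ep_nonneg: "\<alpha> > 0 \<Longrightarrow> x \<in> grid p \<Longrightarrow> endpoint_prob p \<alpha> x \<ge> 0"
  unfolding endpoint_prob_def grid_def by (auto intro!: mult_nonneg_nonneg marg_nonneg)

lemma sum_ep: "\<alpha> > 0 \<Longrightarrow> (\<Sum>x\<in>grid p. endpoint_prob p \<alpha> x) = 1"
  unfolding grid_sum ep_int by (simp add: sum_distrib_left[symmetric] sum_distrib_right[symmetric] marg_sum)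

lemma sum_ep_snd:
  assumes a: "\<alpha> > 0" and r: "0 \<le> r" "r \<le> int p"
  shows "(\<Sum>x\<in>grid p. if snd x = r then endpoint_prob p \<alpha> x else 0) = marg p \<alpha> (nat r)"
proof -
  have "(\<Sum>x\<in>grid p. if snd x = r then endpoint_prob p \<alpha> x else 0)
      = (\<Sum>a\<le>p. \<Sum>b\<le>p. if b = nat r then marg p \<alpha> a * marg p \<alpha> b else 0)"
    unfolding grid_sum ep_int using r by (intro sum.cong refl) auto
  also have "\<dots> = (\<Sum>a\<le>p. marg p \<alpha> a * marg p \<alpha> (nat r))"
    using r by (simp add: sum.delta' nat_le_iff)
  also have "\<dots> = marg p \<alpha> (nat r)" by (simp add: sum_distrib_right[symmetric] marg_sum a)
  finally show ?thesis .
qed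

lemma sum_ep_fst:
  assumes a: "\<alpha> > 0" and r: "0 \<le> r" "r \<le> int p"
  shows "(\<Sum>x\<in>grid p. if fst x = r then endpoint_prob p \<alpha> x else 0) = marg p \<alpha> (nat r)"
proof -
  have "(\<Sum>x\<in>grid p. if fst x = r then endpoint_prob p \<alpha> x else 0)
      = (\<Sum>a\<le>p. \<Sum>b\<le>p. if a = nat r then marg p \<alpha> a * marg p \<alpha> b else 0)"
    unfolding grid_sum ep_int using r by (intro sum.cong refl) auto
  also have "\<dots> = (\<Sum>a\<le>p. if a = nat r then (\<Sum>b\<le>p. marg p \<alpha> a * marg p \<alpha> b) else 0)"
    by (intro sum.cong refl) auto
  also have "\<dots> = (\<Sum>b\<le>p. marg p \<alpha> (nat r) * marg p \<alpha> b)"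
    using r by (simp add: sum.delta' nat_le_iff)
  also have "\<dots> = marg p \<alpha> (nat r)" by (simp add: sum_distrib_left[symmetric] marg_sum a)
  finally show ?thesis .
qed

definition ratio :: "nat \<Rightarrow> vtx \<times> vtx \<Rightarrow> vtx \<Rightarrow> vtx \<Rightarrow> real" where
  "ratio p s x y = real (card {vs \<in> min_turn_routes p x y. s \<in> route_segs vs}) / real (card (min_turn_routes p x y))"

lemma ratio_bounds: "0 \<le> ratio p s x y" "ratio p s x y \<le> 1"
proof -
  show "0 \<le> ratio p s x y" unfolding ratio_def by simp
  show "ratio p s x y \<le> 1"
  proof (cases "finite (min_turn_routes p x y) \<and> card (min_turn_routes p x y) > 0")
    case True
    then have "card {vs \<in> min_turn_routes p x y. s \<in> route_segs vs} \<le> card (min_turn_routes p x y)"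
      by (intro card_mono) auto
    then show ?thesis unfolding ratio_def using True by simp
  next
    case False
    then have "card (min_turn_routes p x y) = 0" by auto
    then show ?thesis unfolding ratio_def by simp
  qed
qed

lemma seg_prob_ratio: "seg_prob p \<alpha> s = (\<Sum>x\<in>grid p. \<Sum>y\<in>grid p. endpoint_prob p \<alpha> x * endpoint_prob p \<alpha> y * ratio p s x y)"
  unfolding seg_prob_def ratio_def ..

lemma upper_snd:
  assumes a: "\<alpha> > 0" and r: "0 \<le> r" "r \<le> int p"
    and Z: "\<And>x y. x \<in> grid p \<Longrightarrow> y \<in> grid p \<Longrightarrow> snd x \<noteq> r \<Longrightarrow> snd y \<noteq> r \<Longrightarrow> ratio p s x y = 0"
  shows "seg_prob p \<alpha> s \<le> 2 * marg p \<alpha> (nat r)"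
proof -
  let ?e = "endpoint_prob p \<alpha>"
  have "seg_prob p \<alpha> s \<le> (\<Sum>x\<in>grid p. \<Sum>y\<in>grid p. (if snd x = r then ?e x else 0) * ?e y + ?e x * (if snd y = r then ?e y else 0))"
    unfolding seg_prob_ratio
  proof (intro sum_mono)
    fix x y assume x: "x \<in> grid p" and y: "y \<in> grid p"
    have ex: "?e x \<ge> 0" "?e y \<ge> 0" using ep_nonneg[OF a] x y by auto
    show "?e x * ?e y * ratio p s x y \<le> (if snd x = r then ?e x else 0) * ?e y + ?e x * (if snd y = r then ?e y else 0)"
    proof (cases "snd x = r \<or> snd y = r")
      case True
      have "?e x * ?e y * ratio p s x y \<le> ?e x * ?e y * 1"
        using ex ratio_bounds by (intro mult_left_mono) auto
      moreover have "?e x * ?e y \<le> (if snd x = r then ?e x else 0) * ?e y + ?e x * (if snd y = r then ?e y else 0)"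
      proof (cases "snd x = r")
        case T2: True
        have "0 \<le> ?e x * (if snd y = r then ?e y else 0)" using ex by simp
        then show ?thesis using T2 by simp
      next
        case F2: False
        then have "snd y = r" using True by auto
        then show ?thesis using F2 by simp
      qed
      ultimately show ?thesis by simp
    next
      case False
      then show ?thesis using Z[OF x y] by auto
    qed
  qed
  also have "\<dots> = 2 * marg p \<alpha> (nat r)"
    by (simp add: sum.distrib sum_distrib_left[symmetric] sum_distrib_right[symmetric] sum_ep[OF a] sum_ep_snd[OF a r])
  finally show ?thesis .
qed

lemma upper_fst:
  assumes a: "\<alpha> > 0" and r: "0 \<le> r" "r \<le> int p"
    and Z: "\<And>x y. x \<in> grid p \<Longrightarrow> y \<in> grid p \<Longrightarrow> fst x \<noteq> r \<Longrightarrow> fst y \<noteq> r \<Longrightarrow> ratio p s x y = 0"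
  shows "seg_prob p \<alpha> s \<le> 2 * marg p \<alpha> (nat r)"
proof -
  let ?e = "endpoint_prob p \<alpha>"
  have "seg_prob p \<alpha> s \<le> (\<Sum>x\<in>grid p. \<Sum>y\<in>grid p. (if fst x = r then ?e x else 0) * ?e y + ?e x * (if fst y = r then ?e y else 0))"
    unfolding seg_prob_ratio
  proof (intro sum_mono)
    fix x y assume x: "x \<in> grid p" and y: "y \<in> grid p"
    have ex: "?e x \<ge> 0" "?e y \<ge> 0" using ep_nonneg[OF a] x y by auto
    show "?e x * ?e y * ratio p s x y \<le> (if fst x = r then ?e x else 0) * ?e y + ?e x * (if fst y = r then ?e y else 0)"
    proof (cases "fst x = r \<or> fst y = r")
      case True
      have "?e x * ?e y * ratio p s x y \<le> ?e x * ?e y * 1"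
        using ex ratio_bounds by (intro mult_left_mono) auto
      moreover have "?e x * ?e y \<le> (if fst x = r then ?e x else 0) * ?e y + ?e x * (if fst y = r then ?e y else 0)"
      proof (cases "fst x = r")
        case T2: True
        have "0 \<le> ?e x * (if fst y = r then ?e y else 0)" using ex by simp
        then show ?thesis using T2 by simp
      next
        case F2: False
        then have "fst y = r" using True by auto
        then show ?thesis using F2 by simp
      qed
      ultimately show ?thesis by simp
    next
      case False
      then show ?thesis using Z[OF x y] by auto
    qed
  qed
  also have "\<dots> = 2 * marg p \<alpha> (nat r)"
    by (simp add: sum.distrib sum_distrib_left[symmetric] sum_distrib_right[symmetric] sum_ep[OF a] sum_ep_fst[OF a r])
  finally show ?thesis .
qed

lemma ratio_zero:
  assumes "\<And>vs. vs \<in> min_turn_routes p x y \<Longrightarrow> s \<notin> route_segs vs"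
  shows "ratio p s x y = 0"
proof -
  have E: "{vs \<in> min_turn_routes p x y. s \<in> route_segs vs} = {}" using assms by auto
  show ?thesis unfolding ratio_def E by simp
qed

lemma upper_seg:
  assumes a: "\<alpha> > 0" and s: "s \<in> segments p"
  shows "\<exists>r. 0 \<le> r \<and> r \<le> int p \<and> seg_prob p \<alpha> s \<le> 2 * marg p \<alpha> (nat r)"
proof -
  obtain u v where s': "s = (u, v)" "u \<in> grid p" "v \<in> grid p" "adj u v" using s unfolding segments_def by auto
  have "snd u = snd v \<or> fst u = fst v" using s'(4) unfolding adj_def by auto
  then show ?thesis
  proof
    assume h: "snd u = snd v"
    have "seg_prob p \<alpha> s \<le> 2 * marg p \<alpha> (nat (snd u))"
    proof (rule upper_snd[OF a])
      show "0 \<le> snd u" "snd u \<le> int p" using s'(2) unfolding grid_def by auto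
      fix x y assume x: "x \<in> grid p" and y: "y \<in> grid p" and nx: "snd x \<noteq> snd u" and ny: "snd y \<noteq> snd u"
      show "ratio p s x y = 0"
        using seg_coord[OF x y, of _ u v] h nx ny s'(1) by (intro ratio_zero) auto
    qed
    then show ?thesis using s'(2) unfolding grid_def by auto
  next
    assume h: "fst u = fst v"
    have "seg_prob p \<alpha> s \<le> 2 * marg p \<alpha> (nat (fst u))"
    proof (rule upper_fst[OF a])
      show "0 \<le> fst u" "fst u \<le> int p" using s'(2) unfolding grid_def by auto
      fix x y assume x: "x \<in> grid p" and y: "y \<in> grid p" and nx: "fst x \<noteq> fst u" and ny: "fst y \<noteq> fst u"
      show "ratio p s x y = 0"
        using seg_coord[OF x y, of _ u v] h nx ny s'(1) by (intro ratio_zero) auto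
    qed
    then show ?thesis using s'(2) unfolding grid_def by auto
  qed
qed

lemma segH:
  fixes a b c i j e :: int
  assumes e: "e = 1 \<or> e = -1" and h1: "0 \<le> e * (i - a)" and h2: "1 \<le> e * (b - i)"
  shows "((i, j), (i + e, j)) \<in> route_segs (RH (a, j) (b, c))"
proof -
  define m where "m = nat \<bar>b - a\<bar>"
  define k where "k = nat (e * (i - a))"
  define n where "n = l1dist (a, j) (b, c)"
  have sg: "sgn (b - a) = e" using e h1 h2 by (auto simp: sgn_if)
  have km: "k + 1 \<le> m" using e h1 h2 unfolding k_def m_def by auto
  have mn: "m \<le> n" unfolding m_def n_def l1dist_def by auto
  have R: "RH (a, j) (b, c) = path2 (a, j) m (e, 0) (0, sgn (c - j)) n"
    unfolding RH_def m_def n_def using sg by simp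
  have p1: "pt (a, j) m (e, 0) (0, sgn (c - j)) k = (i, j)"
    using km e h1 unfolding pt_def k_def by auto
  have p2: "pt (a, j) m (e, 0) (0, sgn (c - j)) (Suc k) = (i + e, j)"
    using km e h1 unfolding pt_def k_def by auto
  show ?thesis unfolding route_segs_def R
    using path2_nth[of k n] path2_nth[of "Suc k" n] km mn p1 p2
    by (intro CollectI exI[of _ k]) auto
qed

lemma segV:
  fixes a b c i j e :: int
  assumes e: "e = 1 \<or> e = -1" and h1: "0 \<le> e * (j - a)" and h2: "1 \<le> e * (b - j)"
  shows "((i, j), (i, j + e)) \<in> route_segs (RV (i, a) (c, b))"
proof -
  define m where "m = nat \<bar>b - a\<bar>"
  define k where "k = nat (e * (j - a))"
  define n where "n = l1dist (i, a) (c, b)"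
  have sg: "sgn (b - a) = e" using e h1 h2 by (auto simp: sgn_if)
  have km: "k + 1 \<le> m" using e h1 h2 unfolding k_def m_def by auto
  have mn: "m \<le> n" unfolding m_def n_def l1dist_def by auto
  have R: "RV (i, a) (c, b) = path2 (i, a) m (0, e) (sgn (c - i), 0) n"
    unfolding RV_def m_def n_def using sg by simp
  have p1: "pt (i, a) m (0, e) (sgn (c - i), 0) k = (i, j)"
    using km e h1 unfolding pt_def k_def by auto
  have p2: "pt (i, a) m (0, e) (sgn (c - i), 0) (Suc k) = (i, j + e)"
    using km e h1 unfolding pt_def k_def by auto
  show ?thesis unfolding route_segs_def R
    using path2_nth[of k n] path2_nth[of "Suc k" n] km mn p1 p2
    by (intro CollectI exI[of _ k]) auto
qed

lemma dsum: "(\<Sum>x\<in>X. \<Sum>y\<in>Y. f x * g y * (c::real)) = c * sum f X * sum g Y"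
  by (simp add: sum_distrib_left sum_distrib_right mult_ac)

definition fl :: "bool \<Rightarrow> vtx \<Rightarrow> vtx" where
  "fl h z = (if h then z else (snd z, fst z))"

lemma fl_grid: "fl h (int a, int b) \<in> grid p \<longleftrightarrow> a \<le> p \<and> b \<le> p"
  by (auto simp: fl_def grid_def)

lemma fl_ep: "endpoint_prob p \<alpha> (fl h (int a, int b)) = marg p \<alpha> a * marg p \<alpha> b"
  by (auto simp: fl_def endpoint_prob_def)

lemma fl_inj: "fl h (int a, int b) = fl h (int a', int b') \<longleftrightarrow> a = a' \<and> b = b'"
  by (auto simp: fl_def)

lemma grid_finite: "finite (grid p)"
  unfolding grid_def by simp

lemma lower_generic:
  assumes a: "\<alpha> > 0" and j0: "j0 \<le> p" and BA: "BA \<subseteq> {..p}" and AA: "AA \<subseteq> {..p}"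
    and H: "\<And>a b c. a \<in> BA \<Longrightarrow> b \<in> AA \<Longrightarrow> c \<le> p \<Longrightarrow> c \<noteq> j0 \<Longrightarrow>
              ratio p s (fl h (int a, int j0)) (fl h (int b, int c)) \<ge> 1/2"
  shows "seg_prob p \<alpha> s \<ge> 1/2 * marg p \<alpha> j0 * (\<Sum>a\<in>BA. marg p \<alpha> a) * (\<Sum>b\<in>AA. marg p \<alpha> b) * (\<Sum>c\<in>{..p} - {j0}. marg p \<alpha> c)"
proof -
  let ?e = "endpoint_prob p \<alpha>"
  let ?T = "\<lambda>x y. ?e x * ?e y * ratio p s x y"
  define C where "C = {..p} - {j0}"
  define Xs where "Xs = (\<lambda>a. fl h (int a, int j0)) ` BA"
  define Ys where "Ys = (\<lambda>(b, c). fl h (int b, int c)) ` (AA \<times> C)"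
  have Xg: "Xs \<subseteq> grid p" unfolding Xs_def using BA j0 fl_grid by auto
  have Yg: "Ys \<subseteq> grid p" unfolding Ys_def C_def using AA fl_grid by auto
  have Tnn: "?T x y \<ge> 0" if "x \<in> grid p" "y \<in> grid p" for x y
    using ep_nonneg[OF a that(1)] ep_nonneg[OF a that(2)] ratio_bounds(1) by simp
  have "(\<Sum>x\<in>Xs. \<Sum>y\<in>grid p. ?T x y) \<le> (\<Sum>x\<in>grid p. \<Sum>y\<in>grid p. ?T x y)"
    using Xg Tnn by (intro sum_mono2 grid_finite sum_nonneg) auto
  moreover have "(\<Sum>x\<in>Xs. \<Sum>y\<in>Ys. ?T x y) \<le> (\<Sum>x\<in>Xs. \<Sum>y\<in>grid p. ?T x y)"
    using Xg Yg Tnn by (intro sum_mono sum_mono2 grid_finite) auto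
  moreover have "(\<Sum>x\<in>Xs. \<Sum>y\<in>Ys. ?e x * ?e y * (1/2)) \<le> (\<Sum>x\<in>Xs. \<Sum>y\<in>Ys. ?T x y)"
  proof (intro sum_mono)
    fix x y assume x: "x \<in> Xs" and y: "y \<in> Ys"
    obtain a' where a': "a' \<in> BA" "x = fl h (int a', int j0)" using x unfolding Xs_def by auto
    obtain b' c' where bc: "b' \<in> AA" "c' \<in> C" "y = fl h (int b', int c')" using y unfolding Ys_def by auto
    have "ratio p s x y \<ge> 1/2" using H[OF a'(1) bc(1)] bc(2) a'(2) bc(3) unfolding C_def by auto
    moreover have "?e x \<ge> 0" "?e y \<ge> 0" using ep_nonneg[OF a, of x p] ep_nonneg[OF a, of y p] x y Xg Yg by auto
    then have "?e x * ?e y \<ge> 0" by simp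
    ultimately show "?e x * ?e y * (1/2) \<le> ?T x y" by (intro mult_left_mono) auto
  qed
  moreover have "(\<Sum>x\<in>Xs. \<Sum>y\<in>Ys. ?e x * ?e y * (1/2)) = 1/2 * (\<Sum>x\<in>Xs. ?e x) * (\<Sum>y\<in>Ys. ?e y)"
    by (rule dsum)
  moreover have "(\<Sum>x\<in>Xs. ?e x) = marg p \<alpha> j0 * (\<Sum>a\<in>BA. marg p \<alpha> a)"
  proof -
    have "inj_on (\<lambda>a. fl h (int a, int j0)) BA" by (auto simp: inj_on_def fl_inj)
    then show ?thesis unfolding Xs_def by (simp add: sum.reindex fl_ep sum_distrib_left mult_ac)
  qed
  moreover have "(\<Sum>y\<in>Ys. ?e y) = (\<Sum>b\<in>AA. marg p \<alpha> b) * (\<Sum>c\<in>C. marg p \<alpha> c)"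
  proof -
    have "inj_on (\<lambda>(b, c). fl h (int b, int c)) (AA \<times> C)" by (auto simp: inj_on_def fl_inj)
    then have "(\<Sum>y\<in>Ys. ?e y) = (\<Sum>z\<in>AA \<times> C. ?e (fl h (int (fst z), int (snd z))))"
      unfolding Ys_def by (simp add: sum.reindex split_def)
    also have "\<dots> = (\<Sum>b\<in>AA. \<Sum>c\<in>C. marg p \<alpha> b * marg p \<alpha> c)"
      by (simp add: sum.cartesian_product fl_ep split_def)
    also have "\<dots> = (\<Sum>b\<in>AA. marg p \<alpha> b) * (\<Sum>c\<in>C. marg p \<alpha> c)"
      by (simp add: sum_product)
    finally show ?thesis .
  qed
  ultimately show ?thesis unfolding seg_prob_ratio C_def by (simp add: mult_ac)
qed

lemma split_aux:
  fixes f :: "nat \<Rightarrow> real"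
  assumes nn: "\<And>k. k \<le> p \<Longrightarrow> f k \<ge> 0" and lo: "\<And>k. k \<le> p \<Longrightarrow> f k \<ge> L / (real p + 1)" and L: "L \<ge> 0"
    and A: "A \<subseteq> {..p}" and B: "B \<subseteq> {..p}" and cA: "2 * card A \<ge> p + 1" and q: "q \<in> B" "f q \<ge> E"
  shows "(\<Sum>a\<in>A. f a) * (\<Sum>b\<in>B. f b) \<ge> L / 2 * E"
proof -
  have fA: "finite A" "finite B" using A B finite_subset by auto
  have "(\<Sum>a\<in>A. L / (real p + 1)) \<le> (\<Sum>a\<in>A. f a)" using A lo by (intro sum_mono) auto
  then have "real (card A) * (L / (real p + 1)) \<le> (\<Sum>a\<in>A. f a)" by simp
  moreover have "L / 2 \<le> real (card A) * (L / (real p + 1))"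
  proof -
    have "real (p + 1) \<le> 2 * real (card A)" using cA by linarith
    then have "L * (real p + 1) \<le> L * (2 * real (card A))" using L by (intro mult_left_mono) auto
    then show ?thesis by (simp add: field_simps)
  qed
  ultimately have SA: "L / 2 \<le> (\<Sum>a\<in>A. f a)" by linarith
  have SB: "E \<le> (\<Sum>b\<in>B. f b)" using q member_le_sum[of q B f] B nn fA by force
  have SB0: "0 \<le> (\<Sum>b\<in>B. f b)" using B nn by (intro sum_nonneg) auto
  have "L / 2 * E \<le> L / 2 * (\<Sum>b\<in>B. f b)" using SB L by (intro mult_left_mono) auto
  also have "\<dots> \<le> (\<Sum>a\<in>A. f a) * (\<Sum>b\<in>B. f b)" using SA SB0 by (intro mult_right_mono) auto
  finally show ?thesis .
qed

lemma split_bound: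
  fixes f :: "nat \<Rightarrow> real"
  assumes nn: "\<And>k. k \<le> p \<Longrightarrow> f k \<ge> 0" and lo: "\<And>k. k \<le> p \<Longrightarrow> f k \<ge> L / (real p + 1)" and L: "L \<ge> 0"
    and e: "f 0 \<ge> E" "f p \<ge> E"
    and U: "A \<union> B = {..p}" and D: "A \<inter> B = {}" and ends: "(0 \<in> A \<and> p \<in> B) \<or> (0 \<in> B \<and> p \<in> A)"
  shows "(\<Sum>a\<in>A. f a) * (\<Sum>b\<in>B. f b) \<ge> L / 2 * E"
proof -
  have A: "A \<subseteq> {..p}" and B: "B \<subseteq> {..p}" using U by auto
  have fin: "finite A" "finite B" using A B finite_subset by auto
  have "card A + card B = p + 1" using card_Un_disjoint[OF fin D] U by simp
  then consider "2 * card A \<ge> p + 1" | "2 * card B \<ge> p + 1" by linarith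
  then show ?thesis
  proof cases
    case 1
    obtain q where "q \<in> B" "f q \<ge> E" using ends e by auto
    then show ?thesis using split_aux[OF nn lo L A B 1] by auto
  next
    case 2
    obtain q where "q \<in> A" "f q \<ge> E" using ends e by auto
    then show ?thesis using split_aux[OF nn lo L B A 2] by (auto simp: mult.commute)
  qed
qed

lemma seg_cases:
  assumes "s \<in> segments p"
  shows "\<exists>i j e. (e = 1 \<or> e = -1) \<and> (i, j) \<in> grid p \<and>
     ((s = ((i, j), (i + e, j)) \<and> (i + e, j) \<in> grid p) \<or> (s = ((i, j), (i, j + e)) \<and> (i, j + e) \<in> grid p))"
proof -
  obtain u v where s: "s = (u, v)" "u \<in> grid p" "v \<in> grid p" "adj u v" using assms unfolding segments_def by auto
  obtain i j where u: "u = (i, j)" by (cases u)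
  obtain i' j' where v: "v = (i', j')" by (cases v)
  have "\<bar>i - i'\<bar> + \<bar>j - j'\<bar> = 1" using s(4) u v by (simp add: adj_def)
  then have "(i' = i + 1 \<and> j' = j) \<or> (i' = i - 1 \<and> j' = j) \<or> (i' = i \<and> j' = j + 1) \<or> (i' = i \<and> j' = j - 1)"
    by arith
  then show ?thesis
  proof (elim disjE)
    assume "i' = i + 1 \<and> j' = j" then show ?thesis using s u v by (intro exI[of _ i] exI[of _ j] exI[of _ 1]) auto
  next
    assume "i' = i - 1 \<and> j' = j" then show ?thesis using s u v by (intro exI[of _ i] exI[of _ j] exI[of _ "-1"]) auto
  next
    assume "i' = i \<and> j' = j + 1" then show ?thesis using s u v by (intro exI[of _ i] exI[of _ j] exI[of _ 1]) auto
  next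
    assume "i' = i \<and> j' = j - 1" then show ?thesis using s u v by (intro exI[of _ i] exI[of _ j] exI[of _ "-1"]) auto
  qed
qed

lemma lower_seg:
  assumes a: "\<alpha> > 0" and s: "s \<in> segments p"
  shows "\<exists>j0 BA AA. j0 \<le> p \<and> BA \<union> AA = {..p} \<and> BA \<inter> AA = {} \<and> ((0 \<in> BA \<and> p \<in> AA) \<or> (0 \<in> AA \<and> p \<in> BA)) \<and>
     seg_prob p \<alpha> s \<ge> 1/2 * marg p \<alpha> j0 * (\<Sum>a\<in>BA. marg p \<alpha> a) * (\<Sum>b\<in>AA. marg p \<alpha> b) * (\<Sum>c\<in>{..p} - {j0}. marg p \<alpha> c)"
proof -
  obtain i j e where e: "e = 1 \<or> e = -1" and u: "(i, j) \<in> grid p"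
    and cs: "(s = ((i, j), (i + e, j)) \<and> (i + e, j) \<in> grid p) \<or> (s = ((i, j), (i, j + e)) \<and> (i, j + e) \<in> grid p)"
    using seg_cases[OF s] by blast
  have ij: "0 \<le> i" "i \<le> int p" "0 \<le> j" "j \<le> int p" using u by (auto simp: grid_def)
  from cs show ?thesis
  proof
    assume h: "s = ((i, j), (i + e, j)) \<and> (i + e, j) \<in> grid p"
    have ie: "0 \<le> i + e" "i + e \<le> int p" using h by (auto simp: grid_def)
    define BA where "BA = {a. a \<le> p \<and> 0 \<le> e * (i - int a)}"
    define AA where "AA = {b. b \<le> p \<and> 1 \<le> e * (int b - i)}"
    have U: "BA \<union> AA = {..p}" unfolding BA_def AA_def using e by auto
    have D: "BA \<inter> AA = {}" unfolding BA_def AA_def using e by auto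
    have E: "(0 \<in> BA \<and> p \<in> AA) \<or> (0 \<in> AA \<and> p \<in> BA)" unfolding BA_def AA_def using e ij ie by auto
    have "seg_prob p \<alpha> s \<ge> 1/2 * marg p \<alpha> (nat j) * (\<Sum>a\<in>BA. marg p \<alpha> a) * (\<Sum>b\<in>AA. marg p \<alpha> b) * (\<Sum>c\<in>{..p} - {nat j}. marg p \<alpha> c)"
    proof (rule lower_generic[OF a, where h=True])
      show "nat j \<le> p" "BA \<subseteq> {..p}" "AA \<subseteq> {..p}" using ij unfolding BA_def AA_def by auto
      fix a b c assume ab: "a \<in> BA" "b \<in> AA" and c: "c \<le> p" "c \<noteq> nat j"
      let ?x = "(int a, j)" and ?y = "(int b, int c)"
      have x: "fl True (int a, int (nat j)) = ?x" using ij by (simp add: fl_def)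
      have y: "fl True (int b, int c) = ?y" by (simp add: fl_def)
      have h1: "0 \<le> e * (i - int a)" and h2: "1 \<le> e * (int b - i)" using ab unfolding BA_def AA_def by auto
      have gx: "?x \<in> grid p" using ab ij unfolding BA_def grid_def by auto
      have gy: "?y \<in> grid p" using ab c unfolding AA_def grid_def by auto
      have ne: "fst ?x \<noteq> fst ?y" "snd ?x \<noteq> snd ?y" using h1 h2 e c ij by auto
      have "s \<in> route_segs (RH ?x ?y)" using segH[OF e h1 h2, of j "int c"] h by simp
      then show "1/2 \<le> ratio p s (fl True (int a, int (nat j))) (fl True (int b, int c))"
        unfolding x y ratio_def using frac_half[OF gx gy ne] by blast
    qed
    moreover have "nat j \<le> p" using ij by auto
    ultimately show ?thesis using U D E by blast
  next
    assume h: "s = ((i, j), (i, j + e)) \<and> (i, j + e) \<in> grid p"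
    have je: "0 \<le> j + e" "j + e \<le> int p" using h by (auto simp: grid_def)
    define BA where "BA = {a. a \<le> p \<and> 0 \<le> e * (j - int a)}"
    define AA where "AA = {b. b \<le> p \<and> 1 \<le> e * (int b - j)}"
    have U: "BA \<union> AA = {..p}" unfolding BA_def AA_def using e by auto
    have D: "BA \<inter> AA = {}" unfolding BA_def AA_def using e by auto
    have E: "(0 \<in> BA \<and> p \<in> AA) \<or> (0 \<in> AA \<and> p \<in> BA)" unfolding BA_def AA_def using e ij je by auto
    have "seg_prob p \<alpha> s \<ge> 1/2 * marg p \<alpha> (nat i) * (\<Sum>a\<in>BA. marg p \<alpha> a) * (\<Sum>b\<in>AA. marg p \<alpha> b) * (\<Sum>c\<in>{..p} - {nat i}. marg p \<alpha> c)"
    proof (rule lower_generic[OF a, where h=False])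
      show "nat i \<le> p" "BA \<subseteq> {..p}" "AA \<subseteq> {..p}" using ij unfolding BA_def AA_def by auto
      fix a b c assume ab: "a \<in> BA" "b \<in> AA" and c: "c \<le> p" "c \<noteq> nat i"
      let ?x = "(i, int a)" and ?y = "(int c, int b)"
      have x: "fl False (int a, int (nat i)) = ?x" using ij by (simp add: fl_def)
      have y: "fl False (int b, int c) = ?y" by (simp add: fl_def)
      have h1: "0 \<le> e * (j - int a)" and h2: "1 \<le> e * (int b - j)" using ab unfolding BA_def AA_def by auto
      have gx: "?x \<in> grid p" using ab ij unfolding BA_def grid_def by auto
      have gy: "?y \<in> grid p" using ab c unfolding AA_def grid_def by auto
      have ne: "fst ?x \<noteq> fst ?y" "snd ?x \<noteq> snd ?y" using h1 h2 e c ij by auto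
      have "s \<in> route_segs (RV ?x ?y)" using segV[OF e h1 h2, of i "int c"] h by simp
      then show "1/2 \<le> ratio p s (fl False (int a, int (nat i))) (fl False (int b, int c))"
        unfolding x y ratio_def using frac_half[OF gx gy ne] by blast
    qed
    moreover have "nat i \<le> p" using ij by auto
    ultimately show ?thesis using U D E by blast
  qed
qed

lemma segments_0: "segments 0 = {}"
  by (auto simp: segments_def grid_def adj_def)

theorem propositionA5:
  fixes \<alpha> :: real
  assumes "0 < \<alpha>" and "\<alpha> \<le> 1"
  shows "\<exists>c1 > 0. \<exists>c2 > 0. \<forall>p::nat. \<forall>s \<in> segments p.
           c1 * real p powr (-1 - \<alpha>) \<le> seg_prob p \<alpha> s \<and>
           seg_prob p \<alpha> s \<le> c2 * real p powr (-\<alpha>)"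
proof -
  have a: "\<alpha> > 0" using assms by simp
  obtain K L where K: "K > 0" and L: "L > 0"
    and mb: "\<And>p k. k \<le> p \<Longrightarrow> marg p \<alpha> k \<le> K * (real p + 1) powr (-\<alpha>) \<and> marg p \<alpha> k \<ge> L / (real p + 1)"
    and me: "\<And>p. marg p \<alpha> 0 \<ge> L * (real p + 1) powr (-\<alpha>) \<and> marg p \<alpha> p \<ge> L * (real p + 1) powr (-\<alpha>)"
    using marg_bounds[OF assms] by blast
  have main: "L^4/32 * real p powr (-1 - \<alpha>) \<le> seg_prob p \<alpha> s \<and> seg_prob p \<alpha> s \<le> (2*K) * real p powr (-\<alpha>)"
    if s: "s \<in> segments p" for p s
  proof -
    have p1: "p \<ge> 1" using s segments_0 by (cases p) auto
    have pp: "real p > 0" using p1 by simp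
    have nn: "\<And>k. k \<le> p \<Longrightarrow> marg p \<alpha> k \<ge> 0" using marg_nonneg[OF a] by blast
    have powle: "(real p + 1) powr (-\<alpha>) \<le> real p powr (-\<alpha>)"
      using pp a by (intro powr_mono2') auto
    obtain r where r: "0 \<le> r" "r \<le> int p" and up: "seg_prob p \<alpha> s \<le> 2 * marg p \<alpha> (nat r)"
      using upper_seg[OF a s] by blast
    have "marg p \<alpha> (nat r) \<le> K * (real p + 1) powr (-\<alpha>)" using mb[of "nat r" p] r by auto
    also have "\<dots> \<le> K * real p powr (-\<alpha>)" using powle K by (intro mult_left_mono) auto
    finally have UP: "seg_prob p \<alpha> s \<le> (2*K) * real p powr (-\<alpha>)" using up by simp
    obtain j0 BA AA where j0: "j0 \<le> p" and U: "BA \<union> AA = {..p}" and D: "BA \<inter> AA = {}"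
      and E: "(0 \<in> BA \<and> p \<in> AA) \<or> (0 \<in> AA \<and> p \<in> BA)"
      and lo: "seg_prob p \<alpha> s \<ge> 1/2 * marg p \<alpha> j0 * (\<Sum>a\<in>BA. marg p \<alpha> a) * (\<Sum>b\<in>AA. marg p \<alpha> b) * (\<Sum>c\<in>{..p} - {j0}. marg p \<alpha> c)"
      using lower_seg[OF a s] by blast
    define SA where "SA = (\<Sum>a\<in>BA. marg p \<alpha> a)"
    define SB where "SB = (\<Sum>b\<in>AA. marg p \<alpha> b)"
    define SC where "SC = (\<Sum>c\<in>{..p} - {j0}. marg p \<alpha> c)"
    define P where "P = (real p + 1) powr (-\<alpha>)"
    have P0: "P \<ge> 0" unfolding P_def by simp
    have SAB: "SA * SB \<ge> L / 2 * (L * P)" unfolding SA_def SB_def P_def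
      using split_bound[of p "marg p \<alpha>" L "L * (real p + 1) powr (-\<alpha>)" BA AA] nn mb me L U D E by auto
    have SC: "SC \<ge> L / 2"
    proof -
      have "(\<Sum>c\<in>{..p} - {j0}. L / (real p + 1)) \<le> SC" unfolding SC_def using mb by (intro sum_mono) auto
      moreover have "card ({..p} - {j0}) = p" using j0 by simp
      ultimately have "real p * (L / (real p + 1)) \<le> SC" by simp
      moreover have "L / 2 \<le> real p * (L / (real p + 1))"
      proof -
        have "L * (real p + 1) \<le> L * (2 * real p)" using L p1 by (intro mult_left_mono) auto
        then show ?thesis by (simp add: field_simps)
      qed
      ultimately show ?thesis by linarith
    qed
    have mj: "marg p \<alpha> j0 \<ge> L / (real p + 1)" using mb[OF j0] by simp
    have "1/2 * (L / (real p + 1)) * (L / 2 * (L * P)) * (L / 2) \<le> 1/2 * marg p \<alpha> j0 * (SA * SB) * SC"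
    proof -
      have m0: "marg p \<alpha> j0 \<ge> 0" using nn j0 by simp
      have x: "1/2 * (L / (real p + 1)) \<le> 1/2 * marg p \<alpha> j0" using mj by (intro mult_left_mono) auto
      have y0: "0 \<le> L / 2 * (L * P)" using L P0 by simp
      have xy: "1/2 * (L / (real p + 1)) * (L / 2 * (L * P)) \<le> 1/2 * marg p \<alpha> j0 * (SA * SB)"
        by (rule mult_mono[OF x SAB]) (use m0 y0 in auto)
      have xy0: "0 \<le> 1/2 * marg p \<alpha> j0 * (SA * SB)" using xy L P0 by (smt (verit) mult_nonneg_nonneg divide_nonneg_nonneg of_nat_0_le_iff)
      show ?thesis by (rule mult_mono[OF xy SC]) (use xy0 L in auto)
    qed
    also have "\<dots> \<le> seg_prob p \<alpha> s" using lo unfolding SA_def SB_def SC_def by (simp add: mult.assoc)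
    finally have lo2: "1/2 * (L / (real p + 1)) * (L / 2 * (L * P)) * (L / 2) \<le> seg_prob p \<alpha> s" .
    have "1/2 * (L / (real p + 1)) * (L / 2 * (L * P)) * (L / 2) = L^4 / 8 * ((real p + 1) powr (-1) * P)"
      by (simp add: powr_minus_divide field_simps power4_eq_xxxx)
    also have "(real p + 1) powr (-1) * P = (real p + 1) powr (-1 - \<alpha>)"
    proof -
      have "(-1 - \<alpha>) = -1 + (-\<alpha>)" by simp
      then show ?thesis unfolding P_def by (simp only: powr_add)
    qed
    finally have eq: "1/2 * (L / (real p + 1)) * (L / 2 * (L * P)) * (L / 2) = L^4 / 8 * (real p + 1) powr (-1 - \<alpha>)" .
    have lo3: "L^4 / 8 * (real p + 1) powr (-1 - \<alpha>) \<le> seg_prob p \<alpha> s" using lo2 unfolding eq .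
    have "(2 * real p) powr (-1 - \<alpha>) \<le> (real p + 1) powr (-1 - \<alpha>)"
      using pp a p1 by (intro powr_mono2') auto
    moreover have "(2 * real p) powr (-1 - \<alpha>) = 2 powr (-1 - \<alpha>) * real p powr (-1 - \<alpha>)"
      using pp by (simp add: powr_mult)
    moreover have "(2::real) powr (-1 - \<alpha>) \<ge> 2 powr (-2)" using assms by (intro powr_mono) auto
    moreover have "(2::real) powr (-2) = 1/4" by (simp add: powr_minus_divide)
    ultimately have "1/4 * real p powr (-1 - \<alpha>) \<le> (real p + 1) powr (-1 - \<alpha>)"
      by (smt (verit) mult_right_mono powr_ge_zero)
    then have "L^4 / 8 * (1/4 * real p powr (-1 - \<alpha>)) \<le> L^4 / 8 * (real p + 1) powr (-1 - \<alpha>)"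
      using L by (intro mult_left_mono) auto
    then have "L^4/32 * real p powr (-1 - \<alpha>) \<le> seg_prob p \<alpha> s" using lo3 by simp
    then show ?thesis using UP by simp
  qed
  have "L^4/32 > 0" "2*K > 0" using L K by auto
  then show ?thesis using main by blast
qed

end
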